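(* Let $f\in C^{1,1}_L(\mathbb{R}^2)$, let $\mathcal{Y}=\{y_1,y_2,y_3\}\subset\mathbb{R}^2$ be affinely independent with $\langle y_2-y_1,y_3-y_1\rangle<0$, and let $m$ be the affine function interpolating $f$ on $\mathcal{Y}$. Let $y_0\in\mathbb{R}^2$ have barycentric coordinates satisfying $\ell_2>0$, $\ell_3<0$, and $\ell_1\langle y_2-y_1,y_3-y_1\rangle-\ell_3\langle y_2-y_3,y_1-y_3\rangle<0$. Let $G=\sum_{i=0}^{3}\ell_iy_iy_i^T$ and $H^\star=P\begin{bmatrix}L&0\\0&-L\end{bmatrix}P^{-1}$ with $P=[\,y_2-y_0\ \ y_1-y_3\,]$. Then $$|m(y_0)-f(y_0)|\le\tfrac12\langle G,H^\star\rangle .$$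
   Context: Let $L>0$. $C^{1,1}_L(\mathbb{R}^2)$ denotes the set of differentiable $f:\mathbb{R}^2\to\mathbb{R}$ with $\|\nabla f(u_1)-\nabla f(u_2)\|\le L\|u_1-u_2\|$ for all $u_1,u_2$ (Euclidean norm). $m$ is the unique affine function with $m(y_i)=f(y_i)$, $i=1,2,3$. The barycentric coordinates of $y_0$ w.r.t. $\mathcal{Y}$ are the unique reals $\ell_1,\ell_2,\ell_3$ with $\ell_1+\ell_2+\ell_3=1$ and $\ell_1y_1+\ell_2y_2+\ell_3y_3=y_0$; one sets $\ell_0=-1$. The matrix $P$ is invertible under these hypotheses. For matrices, $\langle A,B\rangle=\sum_{i,j}A_{ij}B_{ij}$ (here $H^\star$ need not be symmetric). *)

theory Defs
  imports "HOL-Analysis.Analysis"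
begin

definition C11 :: "real \<Rightarrow> (real^2 \<Rightarrow> real) \<Rightarrow> bool" where
  "C11 L f \<longleftrightarrow> (\<exists>g :: real^2 \<Rightarrow> real^2.
      (\<forall>u. (f has_derivative (\<lambda>h. g u \<bullet> h)) (at u)) \<and>
      (\<forall>u1 u2. norm (g u1 - g u2) \<le> L * norm (u1 - u2)))"

definition outer :: "real^2 \<Rightarrow> real^2 \<Rightarrow> real^2^2" where
  "outer x y = (\<chi> i j. x $ i * y $ j)"

definition frob :: "real^2^2 \<Rightarrow> real^2^2 \<Rightarrow> real" where
  "frob A B = (\<Sum>i\<in>UNIV. \<Sum>j\<in>UNIV. A $ i $ j * B $ i $ j)"

definition cols2 :: "real^2 \<Rightarrow> real^2 \<Rightarrow> real^2^2" where
  "cols2 a b = (\<chi> i j. if j = 1 then a $ i else b $ i)"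

definition diag2 :: "real \<Rightarrow> real \<Rightarrow> real^2^2" where
  "diag2 a b = (\<chi> i j. if i = j then (if i = 1 then a else b) else 0)"

end

theory Submission imports Defs begin

lemma descent:
  fixes f :: "real^2 \<Rightarrow> real" and g :: "real^2 \<Rightarrow> real^2"
  assumes hd: "\<forall>u. (f has_derivative (\<lambda>h. g u \<bullet> h)) (at u)"
    and lip: "\<forall>u1 u2. norm (g u1 - g u2) \<le> L * norm (u1 - u2)"
  shows "\<bar>f y - f z - g z \<bullet> (y - z)\<bar> \<le> L/2 * (norm (y - z))^2"
proof -
  define w where "w = y - z"
  define h where "h t = f (z + t *\<^sub>R w) - t * (g z \<bullet> w)" for t
  have dh: "(h has_real_derivative ((g (z + t *\<^sub>R w) - g z) \<bullet> w)) (at t)" for t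
  proof -
    have d1: "((\<lambda>t. z + t *\<^sub>R w) has_derivative (\<lambda>s. s *\<^sub>R w)) (at t)"
      by (auto intro!: derivative_eq_intros simp: abs_le_iff mult_ac)
    have d2: "((\<lambda>t. f (z + t *\<^sub>R w)) has_derivative (\<lambda>s. g (z + t *\<^sub>R w) \<bullet> (s *\<^sub>R w))) (at t)"
      using has_derivative_compose[OF d1 hd[rule_format, of "z + t *\<^sub>R w"]] by simp
    have d3: "((\<lambda>t. f (z + t *\<^sub>R w)) has_real_derivative (g (z + t *\<^sub>R w) \<bullet> w)) (at t)"
      unfolding has_field_derivative_def
    proof -
      have "(\<lambda>s. g (z + t *\<^sub>R w) \<bullet> (s *\<^sub>R w)) = (*) (g (z + t *\<^sub>R w) \<bullet> w)"
        by (auto simp: fun_eq_iff mult.commute)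
      with d2 show "((\<lambda>t. f (z + t *\<^sub>R w)) has_derivative (*) (g (z + t *\<^sub>R w) \<bullet> w)) (at t)" by simp
    qed
    show ?thesis unfolding h_def
      using d3 by (auto intro!: derivative_eq_intros simp: inner_diff_left)
  qed
  have bd: "\<bar>(g (z + t *\<^sub>R w) - g z) \<bullet> w\<bar> \<le> L * t * (norm w)^2" if "t \<ge> 0" for t
  proof -
    have "\<bar>(g (z + t *\<^sub>R w) - g z) \<bullet> w\<bar> \<le> norm (g (z + t *\<^sub>R w) - g z) * norm w"
      by (rule Cauchy_Schwarz_ineq2)
    also have "\<dots> \<le> L * norm (t *\<^sub>R w) * norm w"
      using lip[rule_format, of "z + t *\<^sub>R w" z] by (simp add: mult_right_mono)
    also have "\<dots> = L * t * (norm w)^2" using that by (simp add: power2_eq_square)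
    finally show ?thesis .
  qed
  define c where "c = L * (norm w)^2"
  have A: "(\<lambda>t. h t - c/2 * t^2) 1 \<le> (\<lambda>t. h t - c/2 * t^2) 0"
  proof (rule DERIV_nonpos_imp_nonincreasing[of 0 1])
    fix x :: real assume x: "0 \<le> x" "x \<le> 1"
    show "\<exists>y. ((\<lambda>t. h t - c/2 * t^2) has_real_derivative y) (at x) \<and> y \<le> 0"
      apply (rule exI[of _ "(g (z + x *\<^sub>R w) - g z) \<bullet> w - c * x"])
      using dh[of x] bd[of x] x unfolding c_def
      by (auto intro!: derivative_eq_intros simp: abs_le_iff mult_ac)
  qed simp
  have B: "(\<lambda>t. h t + c/2 * t^2) 0 \<le> (\<lambda>t. h t + c/2 * t^2) 1"
  proof (rule DERIV_nonneg_imp_nondecreasing[of 0 1])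
    fix x :: real assume x: "0 \<le> x" "x \<le> 1"
    show "\<exists>y. ((\<lambda>t. h t + c/2 * t^2) has_real_derivative y) (at x) \<and> y \<ge> 0"
      apply (rule exI[of _ "(g (z + x *\<^sub>R w) - g z) \<bullet> w + c * x"])
      using dh[of x] bd[of x] x unfolding c_def
      by (auto intro!: derivative_eq_intros simp: abs_le_iff mult_ac)
  qed simp
  have "h 1 - h 0 = f y - f z - g z \<bullet> (y - z)" unfolding h_def w_def by simp
  moreover have "h 1 - h 0 \<le> c/2" using A by simp
  moreover have "-(c/2) \<le> h 1 - h 0" using B by simp
  ultimately show ?thesis unfolding c_def w_def by (intro abs_leI) linarith+
qed

lemma interp:
  fixes f :: "real^2 \<Rightarrow> real"
  assumes "C11 L f" "a \<ge> 0" "b \<ge> 0" "a + b = 1"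
  shows "\<bar>a * f x + b * f y - f (a *\<^sub>R x + b *\<^sub>R y)\<bar> \<le> L/2 * a * b * (norm (x - y))^2"
proof -
  obtain g where hd: "\<forall>u. (f has_derivative (\<lambda>h. g u \<bullet> h)) (at u)"
    and lip: "\<forall>u1 u2. norm (g u1 - g u2) \<le> L * norm (u1 - u2)"
    using assms(1) unfolding C11_def by blast
  define z where "z = a *\<^sub>R x + b *\<^sub>R y"
  have a1: "a = 1 - b" using assms(4) by simp
  have xz: "x - z = b *\<^sub>R (x - y)"
    unfolding z_def a1 by (simp add: algebra_simps)
  have yz: "y - z = (-a) *\<^sub>R (x - y)"
    unfolding z_def a1 by (simp add: algebra_simps)
  define E1 where "E1 = f x - f z - g z \<bullet> (x - z)"
  define E2 where "E2 = f y - f z - g z \<bullet> (y - z)"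
  have e1: "\<bar>E1\<bar> \<le> L/2 * (b^2 * (norm (x - y))^2)"
    using descent[OF hd lip, of x z] unfolding E1_def xz using assms
    by (simp add: power_mult_distrib)
  have e2: "\<bar>E2\<bar> \<le> L/2 * (a^2 * (norm (x - y))^2)"
    using descent[OF hd lip, of y z] unfolding E2_def yz using assms
    by (simp add: power_mult_distrib)
  have eq: "a * f x + b * f y - f z = a * E1 + b * E2"
  proof -
    have "a * (g z \<bullet> (x - z)) + b * (g z \<bullet> (y - z)) = g z \<bullet> (a *\<^sub>R (x - z) + b *\<^sub>R (y - z))"
      by (simp add: inner_add_right)
    also have "a *\<^sub>R (x - z) + b *\<^sub>R (y - z) = 0"
      unfolding xz yz by (simp add: algebra_simps)
    finally have "a * (g z \<bullet> (x - z)) + b * (g z \<bullet> (y - z)) = 0" by simp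
    moreover have "a * f z + b * f z = f z" using assms(4) by (metis distrib_right mult_1)
    ultimately show ?thesis unfolding E1_def E2_def
      by (simp add: algebra_simps)
  qed
  have "\<bar>a * E1 + b * E2\<bar> \<le> a * \<bar>E1\<bar> + b * \<bar>E2\<bar>"
    using assms by (simp add: abs_triangle_ineq[THEN order_trans] abs_mult)
  also have "\<dots> \<le> a * (L/2 * (b^2 * (norm (x - y))^2)) + b * (L/2 * (a^2 * (norm (x - y))^2))"
    using assms e1 e2 by (intro add_mono mult_left_mono) auto
  also have "\<dots> = L/2 * a * b * (a + b) * (norm (x - y))^2"
    by (simp add: power2_eq_square algebra_simps)
  finally show ?thesis using eq assms(4) unfolding z_def by simp
qed

lemma frob_outer: "frob (outer x y) H = x \<bullet> (H *v y)"
  unfolding frob_def outer_def inner_vec_def matrix_vector_mult_def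
  by (simp add: sum_distrib_left mult_ac)

lemma frob_add: "frob (A + B) H = frob A H + frob B H"
  unfolding frob_def by (simp add: sum.distrib distrib_right)

lemma frob_scale: "frob (c *\<^sub>R A) H = c * frob A H"
  unfolding frob_def by (simp add: sum_distrib_left mult_ac)

lemma cols2_mult: "cols2 u v *v x = x$1 *\<^sub>R u + x$2 *\<^sub>R v"
  unfolding cols2_def matrix_vector_mult_def by (simp add: vec_eq_iff sum_2 mult_ac)

lemma diag2_e1: "diag2 a b *v (\<chi> i. if i = 1 then 1 else 0) = a *\<^sub>R (\<chi> i. if i = 1 then 1 else 0)"
  unfolding diag2_def matrix_vector_mult_def by (simp add: vec_eq_iff sum_2 forall_2)

lemma diag2_e2: "diag2 a b *v (\<chi> i. if i = 1 then 0 else 1) = b *\<^sub>R (\<chi> i. if i = 1 then 0 else 1)"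
  unfolding diag2_def matrix_vector_mult_def by (simp add: vec_eq_iff sum_2 forall_2)

lemma det_cols2: "det (cols2 u v) = u$1 * v$2 - v$1 * u$2"
  unfolding det_2 cols2_def by simp

lemma inv_left: "invertible (A::real^2^2) \<Longrightarrow> matrix_inv A ** A = mat 1"
  unfolding invertible_def matrix_inv_def by (metis (mono_tags, lifting) someI_ex)

lemma quad:
  fixes H :: "real^2^2"
  assumes "H *v w = lam *\<^sub>R w"
  shows "(p + c *\<^sub>R w) \<bullet> (H *v (p + c *\<^sub>R w)) = p \<bullet> (H *v p) + c * (lam * (p \<bullet> w) + w \<bullet> (H *v p)) + c^2 * lam * (w \<bullet> w)"
  using assms by (simp add: matrix_vector_right_distrib matrix_vector_mult_scaleR inner_add_left inner_add_right algebra_simps power2_eq_square)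

lemma dep2:
  fixes a b :: "real^2"
  assumes "a \<noteq> 0" "a$1 * b$2 - b$1 * a$2 = 0"
  shows "\<exists>c1 c2. (c1 \<noteq> 0 \<or> c2 \<noteq> 0) \<and> c1 *\<^sub>R a + c2 *\<^sub>R b = 0"
proof (cases "b$2 \<noteq> 0 \<or> a$2 \<noteq> 0")
  case True
  show ?thesis
    apply (rule exI[of _ "b$2"], rule exI[of _ "- a$2"])
    using True assms(2) by (auto simp: vec_eq_iff forall_2 algebra_simps)
next
  case False
  then have "a$1 \<noteq> 0" using assms(1) by (auto simp: vec_eq_iff forall_2)
  then show ?thesis
    apply (rule_tac exI[of _ "b$1"], rule_tac exI[of _ "- a$1"])
    using False by (auto simp: vec_eq_iff forall_2 algebra_simps)
qed

lemma indep_det: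
  fixes y1 y2 y3 :: "real^2"
  assumes "y1 \<noteq> y2" "y1 \<noteq> y3" "y2 \<noteq> y3" "\<not> affine_dependent {y1, y2, y3}"
  shows "(y1 - y2)$1 * (y3 - y2)$2 - (y3 - y2)$1 * (y1 - y2)$2 \<noteq> 0"
proof
  assume "(y1 - y2)$1 * (y3 - y2)$2 - (y3 - y2)$1 * (y1 - y2)$2 = 0"
  with dep2[of "y1 - y2" "y3 - y2"] assms(1)
  obtain c1 c2 where c: "c1 \<noteq> 0 \<or> c2 \<noteq> 0" "c1 *\<^sub>R (y1 - y2) + c2 *\<^sub>R (y3 - y2) = 0"
    by auto
  define U where "U x = (if x = y1 then c1 else if x = y2 then -(c1+c2) else c2)" for x
  have "affine_dependent {y1, y2, y3}"
    unfolding affine_dependent_explicit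
  proof (intro exI conjI)
    show "finite {y1, y2, y3}" by simp
    show "{y1, y2, y3} \<subseteq> {y1, y2, y3}" by simp
    show "sum U {y1, y2, y3} = 0" using assms(1-3) unfolding U_def by simp
    show "\<exists>v\<in>{y1, y2, y3}. U v \<noteq> 0" using c(1) assms(1-3) unfolding U_def by auto
    show "(\<Sum>v\<in>{y1, y2, y3}. U v *\<^sub>R v) = 0"
      using assms(1-3) c(2) unfolding U_def by (simp add: algebra_simps)
  qed
  with assms(4) show False by simp
qed


theorem theorem5p3:
  fixes L :: real and f m :: "real^2 \<Rightarrow> real"
    and y0 y1 y2 y3 :: "real^2" and l1 l2 l3 :: real
  assumes "L > 0"
    and "C11 L f"
    and "y1 \<noteq> y2" "y1 \<noteq> y3" "y2 \<noteq> y3"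
    and "\<not> affine_dependent {y1, y2, y3}"
    and "(y2 - y1) \<bullet> (y3 - y1) < 0"
    and "\<exists>a b. \<forall>x. m x = a \<bullet> x + b"
    and "m y1 = f y1" "m y2 = f y2" "m y3 = f y3"
    and "l1 + l2 + l3 = 1"
    and "l1 *\<^sub>R y1 + l2 *\<^sub>R y2 + l3 *\<^sub>R y3 = y0"
    and "l2 > 0" "l3 < 0"
    and "l1 * ((y2 - y1) \<bullet> (y3 - y1)) - l3 * ((y2 - y3) \<bullet> (y1 - y3)) < 0"
  shows "let G = (-1) *\<^sub>R outer y0 y0 + l1 *\<^sub>R outer y1 y1
                 + l2 *\<^sub>R outer y2 y2 + l3 *\<^sub>R outer y3 y3;
             P = cols2 (y2 - y0) (y1 - y3);
             Hs = P ** diag2 L (-L) ** matrix_inv P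
         in \<bar>m y0 - f y0\<bar> \<le> 1/2 * frob G Hs"
proof -
  define k where "k = l1 + l3"
  define u where "u = y2 - y0"
  define v where "v = y1 - y3"
  define A where "A = (y2 - y1) \<bullet> (y3 - y1)"
  define Bq where "Bq = (y2 - y3) \<bullet> (y1 - y3)"
  have AB: "Bq = v \<bullet> v - A" unfolding A_def Bq_def v_def
    by (simp add: inner_diff_left inner_diff_right inner_commute algebra_simps)
  have vv: "v \<bullet> v \<ge> 0" by simp
  have Aneg: "A < 0" using assms(7) unfolding A_def .
  have cond: "l1 * A - l3 * Bq < 0" using assms(16) unfolding A_def Bq_def .
  have "Bq > 0" using AB Aneg vv by linarith
  then have "l3 * Bq < 0" using assms(15) by (simp add: mult_neg_pos)
  then have "l1 * A < 0" using cond by linarith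
  then have l1pos: "l1 > 0" using Aneg by (simp add: mult_less_0_iff)
  have "l3 * Bq = l3 * (v \<bullet> v) - l3 * A" unfolding AB by (simp add: right_diff_distrib)
  then have "k * A < l3 * (v \<bullet> v)" using cond unfolding k_def by (simp add: distrib_right)
  moreover have "l3 * (v \<bullet> v) \<le> 0" using assms(15) vv by (simp add: mult_nonpos_nonneg)
  ultimately have "k * A < 0" by linarith
  then have kpos: "k > 0" using Aneg by (simp add: mult_less_0_iff)
  have l2k: "l2 = 1 - k" using assms(12) unfolding k_def by simp
  have comp: "y0$i = l1 * y1$i + l2 * y2$i + l3 * y3$i" for i
    using arg_cong[OF assms(13), of "\<lambda>x. x$i"] by simp
  define P where "P = cols2 (y2 - y0) (y1 - y3)"
  define D where "D = diag2 L (-L)"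
  define Hs where "Hs = P ** D ** matrix_inv P"
  have Dt: "(y1 - y2)$1 * (y3 - y2)$2 - (y3 - y2)$1 * (y1 - y2)$2 \<noteq> 0"
    using indep_det[OF assms(3-6)] .
  have detP: "det P = k * ((y1 - y2)$1 * (y3 - y2)$2 - (y3 - y2)$1 * (y1 - y2)$2)"
    unfolding P_def det_cols2 by (simp add: comp l2k k_def algebra_simps)
  have invP: "invertible P" unfolding invertible_det_nz detP using Dt kpos by simp
  define e1 :: "real^2" where "e1 = (\<chi> i. if i = 1 then 1 else 0)"
  define e2 :: "real^2" where "e2 = (\<chi> i. if i = 1 then 0 else 1)"
  have Pe1: "P *v e1 = u" unfolding P_def e1_def u_def cols2_mult by simp
  have Pe2: "P *v e2 = v" unfolding P_def e2_def v_def cols2_mult by simp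
  have HU: "Hs *v u = L *\<^sub>R u"
  proof -
    have "matrix_inv P *v u = e1"
      unfolding Pe1[symmetric] matrix_vector_mul_assoc inv_left[OF invP] by simp
    then have "Hs *v u = P *v (D *v e1)"
      unfolding Hs_def by (simp flip: matrix_vector_mul_assoc)
    also have "\<dots> = L *\<^sub>R u" unfolding D_def e1_def diag2_e1
      by (simp add: matrix_vector_mult_scaleR Pe1[unfolded e1_def])
    finally show ?thesis .
  qed
  have HV: "Hs *v v = (-L) *\<^sub>R v"
  proof -
    have "matrix_inv P *v v = e2"
      unfolding Pe2[symmetric] matrix_vector_mul_assoc inv_left[OF invP] by simp
    then have "Hs *v v = P *v (D *v e2)"
      unfolding Hs_def by (simp flip: matrix_vector_mul_assoc)
    also have "\<dots> = (-L) *\<^sub>R v" unfolding D_def e2_def diag2_e2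
      by (metis Pe2 e2_def matrix_vector_mult_scaleR)
    finally show ?thesis .
  qed
  define p where "p = (1/k) *\<^sub>R (l1 *\<^sub>R y1 + l3 *\<^sub>R y3)"
  have knz: "k \<noteq> 0" using kpos by simp
  have y0e: "y0 = p + (l2/k) *\<^sub>R u"
  proof -
    have "y0$i = (l1 * y1$i + l3 * y3$i) / k + l2 * (y2$i - y0$i) / k" for i
    proof -
      have "k * y0$i = l1 * y1$i + l3 * y3$i + l2 * (y2$i - y0$i)"
        using comp[of i] unfolding l2k k_def by (simp add: algebra_simps)
      then have "y0$i = (l1 * y1$i + l3 * y3$i + l2 * (y2$i - y0$i)) / k"
        using knz by (metis nonzero_mult_div_cancel_left)
      then show ?thesis by (simp add: add_divide_distrib)
    qed
    then show ?thesis unfolding vec_eq_iff p_def u_def by (simp add: divide_inverse mult_ac)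
  qed
  have y2e: "y2 = p + (1/k) *\<^sub>R u"
  proof -
    have "y2$i = (l1 * y1$i + l3 * y3$i) / k + (y2$i - y0$i) / k" for i
    proof -
      have "k * y2$i = l1 * y1$i + l3 * y3$i + (y2$i - y0$i)"
        using comp[of i] unfolding l2k k_def by (simp add: algebra_simps)
      then have "y2$i = (l1 * y1$i + l3 * y3$i + (y2$i - y0$i)) / k"
        using knz by (metis nonzero_mult_div_cancel_left)
      then show ?thesis by (simp add: add_divide_distrib)
    qed
    then show ?thesis unfolding vec_eq_iff p_def u_def by (simp add: divide_inverse mult_ac)
  qed
  have y1e: "y1 = p + (l3/k) *\<^sub>R v"
  proof -
    have "y1$i = (l1 * y1$i + l3 * y3$i) / k + l3 * (y1$i - y3$i) / k" for i
    proof -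
      have "k * y1$i = l1 * y1$i + l3 * y3$i + l3 * (y1$i - y3$i)"
        unfolding k_def by (simp add: algebra_simps)
      then have "y1$i = (l1 * y1$i + l3 * y3$i + l3 * (y1$i - y3$i)) / k"
        using knz by (metis nonzero_mult_div_cancel_left)
      then show ?thesis by (simp add: add_divide_distrib)
    qed
    then show ?thesis unfolding vec_eq_iff p_def v_def by (simp add: divide_inverse mult_ac)
  qed
  have y3e: "y3 = p + (-l1/k) *\<^sub>R v"
  proof -
    have "y3$i = (l1 * y1$i + l3 * y3$i) / k - l1 * (y1$i - y3$i) / k" for i
    proof -
      have "k * y3$i = l1 * y1$i + l3 * y3$i - l1 * (y1$i - y3$i)"
        unfolding k_def by (simp add: algebra_simps)
      then have "y3$i = (l1 * y1$i + l3 * y3$i - l1 * (y1$i - y3$i)) / k"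
        using knz by (metis nonzero_mult_div_cancel_left)
      then show ?thesis by (simp add: diff_divide_distrib)
    qed
    then show ?thesis unfolding vec_eq_iff p_def v_def by (simp add: divide_inverse mult_ac)
  qed
  have Q0: "y0 \<bullet> (Hs *v y0) = p \<bullet> (Hs *v p) + (l2/k) * (L * (p \<bullet> u) + u \<bullet> (Hs *v p)) + (l2/k)^2 * L * (u \<bullet> u)"
    using quad[OF HU, of p "l2/k"] by (simp only: y0e[symmetric])
  have Q2: "y2 \<bullet> (Hs *v y2) = p \<bullet> (Hs *v p) + (1/k) * (L * (p \<bullet> u) + u \<bullet> (Hs *v p)) + (1/k)^2 * L * (u \<bullet> u)"
    using quad[OF HU, of p "1/k"] by (simp only: y2e[symmetric])
  have Q1: "y1 \<bullet> (Hs *v y1) = p \<bullet> (Hs *v p) + (l3/k) * ((-L) * (p \<bullet> v) + v \<bullet> (Hs *v p)) + (l3/k)^2 * (-L) * (v \<bullet> v)"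
    using quad[OF HV, of p "l3/k"] by (simp only: y1e[symmetric])
  have Q3: "y3 \<bullet> (Hs *v y3) = p \<bullet> (Hs *v p) + (-l1/k) * ((-L) * (p \<bullet> v) + v \<bullet> (Hs *v p)) + (-l1/k)^2 * (-L) * (v \<bullet> v)"
    using quad[OF HV, of p "-l1/k"] by (simp only: y3e[symmetric])
  define G where "G = (-1) *\<^sub>R outer y0 y0 + l1 *\<^sub>R outer y1 y1 + l2 *\<^sub>R outer y2 y2 + l3 *\<^sub>R outer y3 y3"
  have frobG: "frob G Hs = - (y0 \<bullet> (Hs *v y0)) + l1 * (y1 \<bullet> (Hs *v y1)) + l2 * (y2 \<bullet> (Hs *v y2)) + l3 * (y3 \<bullet> (Hs *v y3))"
    unfolding G_def frob_add frob_scale frob_outer by simp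
  have l1k: "l1 = k - l3" unfolding k_def by simp
  have frobv: "frob G Hs = L * l2 * (u \<bullet> u) / k - L * l1 * l3 * (v \<bullet> v) / k"
    unfolding frobG Q0 Q1 Q2 Q3 using knz unfolding l2k l1k
    by (simp add: field_simps power2_eq_square)
  obtain a b where ab: "\<forall>x. m x = a \<bullet> x + b" using assms(8) by blast
  have bsum: "b = l1 * b + l2 * b + l3 * b" using assms(12) by (metis distrib_right mult_1)
  have my0: "m y0 = l1 * f y1 + l2 * f y2 + l3 * f y3"
  proof -
    have "m y0 = a \<bullet> (l1 *\<^sub>R y1 + l2 *\<^sub>R y2 + l3 *\<^sub>R y3) + b" using ab assms(13) by simp
    also have "\<dots> = l1 * (a \<bullet> y1 + b) + l2 * (a \<bullet> y2 + b) + l3 * (a \<bullet> y3 + b)"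
      by (subst bsum) (simp add: inner_add_right algebra_simps)
    finally show ?thesis using ab assms(9-11) by simp
  qed
  have l1nz: "l1 \<noteq> 0" using l1pos by simp
  have z1: "l2 *\<^sub>R y2 + k *\<^sub>R p = y0"
    unfolding p_def using knz assms(13) by (simp add: algebra_simps)
  have z2: "(k/l1) *\<^sub>R p + (-l3/l1) *\<^sub>R y3 = y1"
  proof -
    have "(k/l1) *\<^sub>R p = (1/l1) *\<^sub>R (l1 *\<^sub>R y1 + l3 *\<^sub>R y3)"
      unfolding p_def using knz by simp
    then show ?thesis using l1nz by (simp add: algebra_simps)
  qed
  have d1: "y2 - p = (1/k) *\<^sub>R u" by (subst y2e) simp
  have d2: "p - y3 = (l1/k) *\<^sub>R v" by (subst y3e) simp
  have n1: "(norm (y2 - p))^2 = (1/k)^2 * (u \<bullet> u)"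
    unfolding d1 by (simp add: power_mult_distrib power_divide power2_norm_eq_inner[symmetric])
  have n2: "(norm (p - y3))^2 = (l1/k)^2 * (v \<bullet> v)"
    unfolding d2 by (simp add: power_mult_distrib power_divide power2_norm_eq_inner[symmetric])
  define T1 where "T1 = l2 * f y2 + k * f p - f y0"
  define T2 where "T2 = (k/l1) * f p + (-l3/l1) * f y3 - f y1"
  have I1: "\<bar>T1\<bar> \<le> L/2 * l2 * k * ((1/k)^2 * (u \<bullet> u))"
    using interp[OF assms(2), of l2 k y2 p] assms(14) kpos l2k unfolding T1_def z1 n1 by simp
  have I2: "\<bar>T2\<bar> \<le> L/2 * (k/l1) * (-l3/l1) * ((l1/k)^2 * (v \<bullet> v))"
  proof -
    have "k/l1 + -l3/l1 = 1" using l1nz unfolding k_def by (simp add: field_simps)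
    moreover have "l3/l1 \<le> 0" using assms(15) l1pos by (simp add: divide_nonpos_pos)
    ultimately show ?thesis
      using interp[OF assms(2), of "k/l1" "-l3/l1" p y3] assms(15) kpos l1pos
      unfolding T2_def z2 n2 by simp
  qed
  have eq: "m y0 - f y0 = T1 - l1 * T2"
    unfolding my0 T1_def T2_def using l1nz by (simp add: field_simps)
  have "\<bar>T1 - l1 * T2\<bar> \<le> \<bar>T1\<bar> + l1 * \<bar>T2\<bar>"
    using abs_triangle_ineq4[of T1 "l1 * T2"] l1pos by (simp add: abs_mult)
  also have "\<dots> \<le> L/2 * l2 * k * ((1/k)^2 * (u \<bullet> u)) + l1 * (L/2 * (k/l1) * (-l3/l1) * ((l1/k)^2 * (v \<bullet> v)))"
    using I1 I2 l1pos by (intro add_mono mult_left_mono) auto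
  also have "\<dots> = 1/2 * frob G Hs"
    unfolding frobv using knz l1nz by (simp add: field_simps power2_eq_square)
  finally have "\<bar>m y0 - f y0\<bar> \<le> 1/2 * frob G Hs" unfolding eq .
  then show ?thesis
    unfolding Let_def P_def[symmetric] D_def[symmetric] Hs_def[symmetric] G_def[symmetric] .
qed

end
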